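(* For $(c,d)\in\mathbb{C}\times\mathbb{C}^*$ let $f_{c,d}(z) = 1 + \frac cz + \frac d{z^2}$ and identify $(c,d)$ with $[c:d:1]\in\mathbb{CP}^2$. For $n\ge 1$ let $\mathcal{X}_n$ be the set of $(c,d)\in\mathbb{C}\times\mathbb{C}^*$ such that $0$ is periodic under $f_{c,d}$ with period dividing $n$, and $\overline{\mathcal{X}_n}$ its closure in $\mathbb{CP}^2$. Let $n\ge 3$. If $[c:0:1]\in\overline{\mathcal{X}_n}$, then $c^{-1} = -4\cos^2(\pi p/q)$ for some integers $1\le p<q\le n$ with $\gcd(p,q)=1$ and $q\ne 2$. *)

theory Defs
  imports "HOL-Analysis.Analysis"
begin

text \<open>Points of the Riemann sphere: None is infinity, Some z is z.
  The extension of f(z) = 1 + c/z + d/z^2 to the sphere.\<close>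
definition fcd :: "complex \<Rightarrow> complex \<Rightarrow> complex option \<Rightarrow> complex option" where
  "fcd c d w = (case w of
      None \<Rightarrow> Some 1
    | Some z \<Rightarrow> (if z = 0 then (if c = 0 \<and> d = 0 then Some 1 else None)
                 else Some (1 + c / z + d / z ^ 2)))"

definition Xset :: "nat \<Rightarrow> (complex \<times> complex) set" where
  "Xset n = {(c, d). d \<noteq> 0 \<and> (fcd c d ^^ n) (Some 0) = Some 0}"

end

theory Submission imports Defs begin

fun aa :: "complex \<Rightarrow> nat \<Rightarrow> complex" where
  "aa c 0 = 0" | "aa c (Suc 0) = 1" | "aa c (Suc (Suc j)) = aa c (Suc j) + c * aa c j"

lemma aa_c0: "aa 0 (Suc j) = 1"
  by (induction j) auto

lemma aa_lam:
  assumes "l1 + l2 = 1" "l1 * l2 = - c"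
  shows "aa c j * (l1 - l2) = l1 ^ j - l2 ^ j"
proof -
  have e2: "l2 = 1 - l1" using assms(1) by (auto simp: eq_diff_eq add.commute)
  have e1: "l1 = 1 - l2" using assms(1) by (auto simp: eq_diff_eq)
  have "l1^2 = l1 - l1*(1-l1)" by (simp add: algebra_simps power2_eq_square)
  also have "\<dots> = l1 + c" using assms(2) e2 by simp
  finally have q1: "l1^2 = l1 + c" .
  have "l2^2 = l2 - (1-l2)*l2" by (simp add: algebra_simps power2_eq_square)
  also have "\<dots> = l2 + c" using assms(2) e1 by simp
  finally have q2: "l2^2 = l2 + c" .
  have "aa c j * (l1 - l2) = l1 ^ j - l2 ^ j \<and> aa c (Suc j) * (l1 - l2) = l1 ^ Suc j - l2 ^ Suc j"
  proof (induction j)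
    case 0 then show ?case by simp
  next
    case (Suc j)
    have "aa c (Suc (Suc j)) * (l1 - l2) = aa c (Suc j) * (l1 - l2) + c * (aa c j * (l1 - l2))"
      by (simp add: algebra_simps)
    also have "\<dots> = (l1 ^ Suc j - l2 ^ Suc j) + c * (l1 ^ j - l2 ^ j)"
      using Suc by (simp only:)
    also have "\<dots> = l1^j * (l1 + c) - l2^j * (l2 + c)" by (simp add: algebra_simps)
    also have "\<dots> = l1 ^ Suc (Suc j) - l2 ^ Suc (Suc j)"
      unfolding q1[symmetric] q2[symmetric] by (simp add: power2_eq_square)
    finally show ?case using Suc by simp
  qed
  then show ?thesis by simp
qed

lemma aa_par: "aa (-1/4) j * 2^j = 2 * of_nat j"
proof -
  have "aa (-1/4) j * 2^j = 2 * of_nat j \<and> aa (-1/4) (Suc j) * 2^(Suc j) = 2 * of_nat (Suc j)"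
  proof (induction j)
    case 0 then show ?case by simp
  next
    case (Suc j)
    have "aa (-1/4) (Suc (Suc j)) * 2^(Suc (Suc j)) = 2 * (aa (-1/4) (Suc j) * 2^(Suc j)) - (aa (-1/4) j * 2^j)"
      by (simp add: algebra_simps)
    also have "\<dots> = 2 * (2 * of_nat (Suc j)) - 2 * of_nat j" using Suc by simp
    also have "\<dots> = 2 * of_nat (Suc (Suc j))" by simp
    finally show ?case using Suc by simp
  qed
  then show ?thesis by simp
qed

lemma alg:
  assumes "aa c m = 0" "m \<ge> 1"
  shows "\<exists>p q :: int. 1 \<le> p \<and> p < q \<and> q \<le> int m \<and> gcd p q = 1 \<and> q \<noteq> 2 \<and>
           c \<noteq> 0 \<and> inverse c = complex_of_real (- 4 * (cos (pi * real_of_int p / real_of_int q))^2)"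
proof -
  have c0: "c \<noteq> 0" using assms aa_c0 by (cases m) auto
  define s where "s = csqrt (1 + 4*c)"
  have s2: "s^2 = 1 + 4*c" unfolding s_def by simp
  have s0: "s \<noteq> 0"
  proof
    assume "s = 0"
    then have h: "1 + 4*c = 0" using s2 by simp
    have "c = ((1 + 4*c) - 1)/4" by (simp add: field_simps)
    then have "c = -1/4" unfolding h by simp
    then have "aa c m * 2^m = 2 * of_nat m" using aa_par by simp
    then show False using assms by simp
  qed
  define l1 where "l1 = (1 + s)/2"
  define l2 where "l2 = (1 - s)/2"
  have sum1: "l1 + l2 = 1" unfolding l1_def l2_def by (simp add: field_simps)
  have prod: "l1 * l2 = - c" unfolding l1_def l2_def using s2
    by (simp add: field_simps power2_eq_square)
  have dif: "l1 - l2 = s" unfolding l1_def l2_def by (simp add: field_simps)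
  have "l1 ^ m = l2 ^ m" using aa_lam[OF sum1 prod, of m] assms by simp
  have l20: "l2 \<noteq> 0" using prod c0 by auto
  define z where "z = l1 / l2"
  have zm: "z ^ m = 1" unfolding z_def using \<open>l1 ^ m = l2 ^ m\<close> l20 by (simp add: power_divide)
  have z1: "z \<noteq> 1" unfolding z_def using l20 dif s0 by auto
  have l1z: "l1 = z * l2" unfolding z_def using l20 by simp
  have im: "(\<lambda>k. cis (2 * pi * real k / real m)) ` {..<m} = {z. z^m = 1}"
    by (rule bij_betw_imp_surj_on[OF Complex.bij_betw_roots_unity]) (use assms in simp)
  have "z \<in> (\<lambda>k. cis (2 * pi * real k / real m)) ` {..<m}"
    unfolding im using zm by blast
  then obtain k where k: "k < m" "z = cis (2 * pi * real k / real m)"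
    by (auto simp del: cis_conv_exp)
  have k0: "k \<noteq> 0" proof assume "k = 0" then show False using k z1 by (simp del: cis_conv_exp) qed
  define g where "g = gcd k m"
  have g0: "g > 0" unfolding g_def using k0 by simp
  define p where "p = k div g"
  define q where "q = m div g"
  have kp: "k = p * g" unfolding p_def g_def by simp
  have mq: "m = q * g" unfolding q_def g_def by simp
  have "p * g < q * g" using k(1) kp mq by simp
  then have pq: "p < q" by (simp add: mult_less_cancel2)
  have p1: "p \<ge> 1" using k0 kp by (cases p) auto
  have "q * 1 \<le> q * g" using g0 by (intro mult_le_mono2) simp
  then have qm: "q \<le> m" using mq by simp
  have cop: "coprime p q" unfolding p_def q_def g_def using k0 by (simp add: div_gcd_coprime)
  define th where "th = 2 * pi * real p / real q"
  have zth: "z = cis th" unfolding th_def using k(2) kp mq g0 by (simp add: field_simps)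
  have "l2 * (1 + z) = 1" using sum1 l1z by (simp add: algebra_simps)
  have ic: "inverse c = - (z + 2 + inverse z)"
  proof -
    have z0: "z \<noteq> 0" using zth by simp
    have "c = - z * l2^2" using prod l1z by (simp add: power2_eq_square algebra_simps)
    have "(1 + z) * l2 = 1" using \<open>l2 * (1 + z) = 1\<close> by (simp add: mult.commute)
    then have "inverse (1 + z) = l2" by (rule inverse_unique)
    then have "c = - z * (inverse (1 + z))^2" using \<open>c = - z * l2^2\<close> by simp
    then have "c = - z / (1+z)^2" by (simp add: power_inverse divide_inverse)
    then have "inverse c = - ((1+z)^2 / z)" by (simp add: inverse_eq_divide)
    also have "\<dots> = - (z + 2 + inverse z)" using z0 by (simp add: field_simps power2_eq_square)
    finally show ?thesis .
  qed
  have "z + inverse z = complex_of_real (2 * cos th)" unfolding zth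
    by (simp add: cis_inverse complex_eq_iff)
  moreover have "2 + 2 * cos th = 4 * (cos (pi * real p / real q))^2"
  proof -
    define x where "x = pi * real p / real q"
    have "th = 2 * x" unfolding th_def x_def by simp
    then have "cos th = 2 * (cos x)^2 - 1" by (simp only: cos_double_cos)
    then show ?thesis unfolding x_def[symmetric] by simp
  qed
  ultimately have icr: "inverse c = complex_of_real (- 4 * (cos (pi * real p / real q))^2)"
  proof -
    assume A: "z + inverse z = complex_of_real (2 * cos th)" and B: "2 + 2 * cos th = 4 * (cos (pi * real p / real q))^2"
    have "inverse c = - (2 + (z + inverse z))" using ic by (simp add: algebra_simps)
    also have "\<dots> = - complex_of_real (2 + 2 * cos th)" unfolding A by simp
    also have "\<dots> = complex_of_real (- 4 * (cos (pi * real p / real q))^2)" unfolding B by simp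
    finally show ?thesis .
  qed
  have q2: "q \<noteq> 2"
  proof
    assume "q = 2"
    then have "p = 1" using pq p1 by simp
    then have "z = -1" using zth \<open>q = 2\<close> unfolding th_def by (simp add: complex_eq_iff)
    then show False using \<open>l2 * (1 + z) = 1\<close> by simp
  qed
  show ?thesis
    apply (rule exI[of _ "int p"], rule exI[of _ "int q"])
    using p1 pq qm cop q2 c0 icr by (simp add: gcd_int_def)
qed

lemma orbit:
  fixes cs ds :: "nat \<Rightarrow> complex"
  assumes cs: "cs \<longlonglongrightarrow> c" and ds: "ds \<longlonglongrightarrow> 0" and dn: "\<forall>k. ds k \<noteq> 0" and j: "j \<ge> 1"
  shows "(\<forall>i. 1 \<le> i \<and> i \<le> j \<longrightarrow> aa c i \<noteq> 0) \<longrightarrow>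
    (\<exists>y. eventually (\<lambda>k. (fcd (cs k) (ds k) ^^ Suc j) (Some 0) = Some (y k)) sequentially
        \<and> (y \<longlonglongrightarrow> aa c (Suc j) / aa c j))"
  using j
proof (induction j rule: dec_induct)
  case base
  have "\<forall>k. (fcd (cs k) (ds k) ^^ Suc 1) (Some 0) = Some 1"
    using dn by (simp add: fcd_def)
  then show ?case by (intro impI exI[of _ "\<lambda>k. 1"]) simp
next
  case (step j)
  show ?case
  proof
    assume H: "\<forall>i. 1 \<le> i \<and> i \<le> Suc j \<longrightarrow> aa c i \<noteq> 0"
    then obtain y where ey: "eventually (\<lambda>k. (fcd (cs k) (ds k) ^^ Suc j) (Some 0) = Some (y k)) sequentially"
      and ly: "y \<longlonglongrightarrow> aa c (Suc j) / aa c j" using step by auto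
    have a1: "aa c (Suc j) \<noteq> 0" and a0: "aa c j \<noteq> 0" using H step(1) by auto
    have "aa c (Suc j) / aa c j \<noteq> 0" using a1 a0 by simp
    then have ne: "eventually (\<lambda>k. y k \<noteq> 0) sequentially" using ly tendsto_imp_eventually_ne by blast
    define y' where "y' k = 1 + cs k / y k + ds k / (y k)^2" for k
    have "eventually (\<lambda>k. (fcd (cs k) (ds k) ^^ Suc (Suc j)) (Some 0) = Some (y' k)) sequentially"
      using eventually_conj[OF ey ne] by (rule eventually_mono) (simp add: fcd_def y'_def)
    moreover have "y' \<longlonglongrightarrow> 1 + c / (aa c (Suc j) / aa c j) + 0 / (aa c (Suc j) / aa c j)^2"
      unfolding y'_def using \<open>aa c (Suc j) / aa c j \<noteq> 0\<close>
      by (intro tendsto_intros cs ds ly) auto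
    moreover have "1 + c / (aa c (Suc j) / aa c j) + 0 / (aa c (Suc j) / aa c j)^2 = aa c (Suc (Suc j)) / aa c (Suc j)"
      using a0 a1 by (simp add: field_simps)
    ultimately show "\<exists>y. eventually (\<lambda>k. (fcd (cs k) (ds k) ^^ Suc (Suc j)) (Some 0) = Some (y k)) sequentially
        \<and> (y \<longlonglongrightarrow> aa c (Suc (Suc j)) / aa c (Suc j))" by auto
  qed
qed

theorem lemma2p3:
  fixes n :: nat and c :: complex
  assumes "n \<ge> 3"
    and "(c, 0) \<in> closure (Xset n)"
  shows "\<exists>p q :: int. 1 \<le> p \<and> p < q \<and> q \<le> int n \<and> gcd p q = 1 \<and> q \<noteq> 2 \<and>
           c \<noteq> 0 \<and> inverse c = complex_of_real (- 4 * (cos (pi * real_of_int p / real_of_int q))^2)"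
proof -
  obtain f where fX: "\<forall>k. f k \<in> Xset n" and fl: "f \<longlonglongrightarrow> (c, 0)"
    using assms(2) unfolding closure_sequential by blast
  define cs where "cs k = fst (f k)" for k
  define ds where "ds k = snd (f k)" for k
  have cs: "cs \<longlonglongrightarrow> c" unfolding cs_def using tendsto_fst[OF fl] by simp
  have ds: "ds \<longlonglongrightarrow> 0" unfolding ds_def using tendsto_snd[OF fl] by simp
  have dn: "\<forall>k. ds k \<noteq> 0" and per: "\<forall>k. (fcd (cs k) (ds k) ^^ n) (Some 0) = Some 0"
    using fX unfolding cs_def ds_def Xset_def by (auto simp: case_prod_beta)
  have "\<exists>m. 1 \<le> m \<and> m \<le> n \<and> aa c m = 0"
  proof (rule ccontr)
    assume "\<not> ?thesis"
    then have H: "\<forall>i. 1 \<le> i \<and> i \<le> n - 1 \<longrightarrow> aa c i \<noteq> 0" and an: "aa c n \<noteq> 0"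
      using assms(1) by auto
    have n1: "Suc (n - 1) = n" using assms(1) by simp
    obtain y where ey: "eventually (\<lambda>k. (fcd (cs k) (ds k) ^^ n) (Some 0) = Some (y k)) sequentially"
      and ly: "y \<longlonglongrightarrow> aa c n / aa c (n - 1)"
    proof -
      have "1 \<le> n - 1" using assms(1) by simp
      from orbit[OF cs ds dn this] H show ?thesis using that unfolding n1 by blast
    qed
    have "eventually (\<lambda>k. y k = 0) sequentially"
      using ey by (rule eventually_mono) (use per in auto)
    then have "y \<longlonglongrightarrow> 0" by (rule tendsto_eventually)
    then have "aa c n / aa c (n - 1) = 0" using ly LIMSEQ_unique by blast
    moreover have "aa c (n - 1) \<noteq> 0" using H assms(1) by auto
    ultimately show False using an by simp
  qed
  then obtain m where m: "1 \<le> m" "m \<le> n" "aa c m = 0" by blast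
  show ?thesis using alg[OF m(3) m(1)] m(2)
    apply (elim exE conjE)
    subgoal for p q
      apply (rule exI[of _ p], rule exI[of _ q])
      by simp
    done
qed

end
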